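(* Let $\mathcal{O}\subset\mathbb{R}^n$ be open and let $V_1,\dots,V_K:\mathcal{O}\to\mathbb{R}$ be proper piecewise $C^1$ functions on $\mathcal{O}$. Then the functions $V_M,V_m:\mathcal{O}\to\mathbb{R}$ defined by $V_M(x):=\max_{i=1,\dots,K}V_i(x)$ and $V_m(x):=\min_{i=1,\dots,K}V_i(x)$ are proper piecewise $C^1$ on $\mathcal{O}$.
   Context: For open $\mathcal{O}\subset\mathbb{R}^n$, a continuous $V:\mathcal{O}\to\mathbb{R}$ is proper piecewise $C^1$ on $\mathcal{O}$ if there exist $\mathcal{I}=\{1,\dots,N\}$, closed sets $\mathcal{X}_i\subset\mathbb{R}^n$, open sets $\mathcal{O}_i\subset\mathbb{R}^n$ and continuously differentiable $W_i:\mathcal{O}_i\to\mathbb{R}$ ($i\in\mathcal{I}$) such that: (A) $\mathcal{X}_i\cap\mathcal{O}\subset\mathcal{O}_i$ for all $i$; (B) $\overline{\mathrm{int}(\mathcal{X}_i)}=\mathcal{X}_i$ for all $i$; (C) $\mathcal{O}\subset\bigcup_{i\in\mathcal{I}}\mathcal{X}_i$; (D) $V(x)=W_i(x)$ whenever $x\in\mathcal{X}_i\cap\mathcal{O}$. *)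

theory Defs
  imports "HOL-Analysis.Analysis"
begin

definition C1_on :: "('a::euclidean_space) set \<Rightarrow> ('a \<Rightarrow> real) \<Rightarrow> bool" where
  "C1_on S W \<longleftrightarrow> (\<exists>W'. (\<forall>x\<in>S. (W has_derivative blinfun_apply (W' x)) (at x))
                          \<and> continuous_on S W')"

definition proper_piecewise_C1 :: "('a::euclidean_space) set \<Rightarrow> ('a \<Rightarrow> real) \<Rightarrow> bool" where
  "proper_piecewise_C1 U V \<longleftrightarrow> continuous_on U V \<and>
    (\<exists>(N::nat) (X::nat \<Rightarrow> 'a set) (Os::nat \<Rightarrow> 'a set) (W::nat \<Rightarrow> 'a \<Rightarrow> real).
       (\<forall>i\<in>{1..N}. closed (X i) \<and> open (Os i) \<and> C1_on (Os i) (W i)) \<and>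
       (\<forall>i\<in>{1..N}. X i \<inter> U \<subseteq> Os i) \<and>
       (\<forall>i\<in>{1..N}. closure (interior (X i)) = X i) \<and>
       U \<subseteq> (\<Union>i\<in>{1..N}. X i) \<and>
       (\<forall>i\<in>{1..N}. \<forall>x\<in>X i \<inter> U. V x = W i x))"

end

theory Submission
  imports Defs
begin

lemma regular_closed_ci:
  "closure (interior (closure (interior S))) = closure (interior S)"
proof
  show "closure (interior (closure (interior S))) \<subseteq> closure (interior S)"
    by (meson closed_closure closure_minimal interior_subset)
  show "closure (interior S) \<subseteq> closure (interior (closure (interior S)))"
    by (simp add: closure_mono closure_subset interior_maximal)
qed

lemma cover_aux:
  assumes "finite J" "open U"
  shows "\<And>B. \<lbrakk>\<forall>j\<in>J. closedin (top_of_set U) (S j); open B; B \<noteq> {}; B \<subseteq> U;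
          B \<subseteq> (\<Union>j\<in>J. S j)\<rbrakk> \<Longrightarrow> \<exists>j\<in>J. interior (S j) \<inter> B \<noteq> {}"
  using assms(1)
proof (induction J rule: finite_induct)
  case empty
  then show ?case by auto
next
  case (insert a J)
  show ?case
  proof (cases "B \<subseteq> S a")
    case True
    then have "B \<subseteq> interior (S a)" using insert by (simp add: interior_maximal)
    then show ?thesis using insert by auto
  next
    case False
    obtain T where T: "closed T" "S a = U \<inter> T" using insert.prems(1) closedin_closed by blast
    have "B - S a = B - T" using T insert.prems by auto
    then have o: "open (B - S a)" using T insert.prems by (simp add: open_Diff)
    have "B - S a \<subseteq> (\<Union>j\<in>J. S j)" using insert.prems by auto
    then obtain j where "j \<in> J" "interior (S j) \<inter> (B - S a) \<noteq> {}"
      using insert.IH[of "B - S a"] insert.prems o False by auto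
    then show ?thesis by auto
  qed
qed

lemma cover:
  fixes S :: "'j \<Rightarrow> 'a::metric_space set"
  assumes "finite J" "open U" "\<forall>j\<in>J. closedin (top_of_set U) (S j)"
    "U \<subseteq> (\<Union>j\<in>J. S j)"
  shows "U \<subseteq> (\<Union>j\<in>J. closure (interior (S j)))"
proof
  fix x assume x: "x \<in> U"
  define G where "G = (\<Union>j\<in>J. interior (S j))"
  have "x \<in> closure G"
  proof (rule ccontr)
    assume "x \<notin> closure G"
    then obtain e where e: "e > 0" "ball x e \<inter> G = {}"
      by (metis closure_approachable disjoint_iff mem_ball dist_commute)
    define B where "B = ball x e \<inter> U"
    have xB: "x \<in> B" unfolding B_def using e x by (metis IntI centre_in_ball)
    have "open B" using assms(2) by (simp add: B_def open_Int)
    moreover have "B \<noteq> {}" using xB by blast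
    moreover have "B \<subseteq> U" by (simp add: B_def)
    moreover have "B \<subseteq> (\<Union>j\<in>J. S j)" using assms(4) B_def by auto
    ultimately obtain j where "j \<in> J" "interior (S j) \<inter> B \<noteq> {}"
      using cover_aux[OF assms(1,2)] assms(3) by blast
    then show False using e unfolding G_def B_def by auto
  qed
  moreover have "closure G \<subseteq> (\<Union>j\<in>J. closure (interior (S j)))"
    unfolding G_def
    by (rule closure_minimal) (use assms(1) closure_subset in auto)
  ultimately show "x \<in> (\<Union>j\<in>J. closure (interior (S j)))" by blast
qed

lemma reindex:
  fixes X Os :: "'j \<Rightarrow> 'a::euclidean_space set" and W :: "'j \<Rightarrow> 'a \<Rightarrow> real"
  assumes "finite J" "continuous_on U F"
    "\<forall>j\<in>J. closed (X j) \<and> open (Os j) \<and> C1_on (Os j) (W j)"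
    "\<forall>j\<in>J. X j \<inter> U \<subseteq> Os j"
    "\<forall>j\<in>J. closure (interior (X j)) = X j"
    "U \<subseteq> (\<Union>j\<in>J. X j)"
    "\<forall>j\<in>J. \<forall>x\<in>X j \<inter> U. F x = W j x"
  shows "proper_piecewise_C1 U F"
proof -
  obtain h where h: "bij_betw h {1..card J} J" using ex_bij_betw_nat_finite_1[OF assms(1)] by blast
  have hJ: "\<And>n. n \<in> {1..card J} \<Longrightarrow> h n \<in> J" using h bij_betwE by blast
  have im: "h ` {1..card J} = J" using h bij_betw_imp_surj_on by blast
  have cov: "U \<subseteq> (\<Union>n\<in>{1..card J}. X (h n))"
  proof
    fix x assume "x \<in> U"
    then obtain j where j: "j \<in> J" "x \<in> X j" using assms(6) by blast
    have "j \<in> h ` {1..card J}" using im j by simp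
    then obtain n where "n \<in> {1..card J}" "j = h n" by (rule imageE) simp
    then show "x \<in> (\<Union>n\<in>{1..card J}. X (h n))" using j by blast
  qed
  show ?thesis unfolding proper_piecewise_C1_def
    apply (rule conjI, rule assms(2))
    apply (rule exI[of _ "card J"], rule exI[of _ "\<lambda>n. X (h n)"],
        rule exI[of _ "\<lambda>n. Os (h n)"], rule exI[of _ "\<lambda>n. W (h n)"])
    using hJ assms cov by auto
qed

definition pc :: "('a::euclidean_space) set \<Rightarrow> ('a \<Rightarrow> real) \<Rightarrow> nat \<Rightarrow> (nat \<Rightarrow> 'a set) \<Rightarrow> (nat \<Rightarrow> 'a set) \<Rightarrow> (nat \<Rightarrow> 'a \<Rightarrow> real) \<Rightarrow> bool" where
  "pc U V N X Os W \<longleftrightarrow> (\<forall>i\<in>{1..N}. closed (X i) \<and> open (Os i) \<and> C1_on (Os i) (W i)) \<and>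
       (\<forall>i\<in>{1..N}. X i \<inter> U \<subseteq> Os i) \<and>
       (\<forall>i\<in>{1..N}. closure (interior (X i)) = X i) \<and>
       U \<subseteq> (\<Union>i\<in>{1..N}. X i) \<and>
       (\<forall>i\<in>{1..N}. \<forall>x\<in>X i \<inter> U. V x = W i x)"

lemma ppc_iff: "proper_piecewise_C1 U V \<longleftrightarrow> continuous_on U V \<and> (\<exists>N X Os W. pc U V N X Os W)"
  unfolding proper_piecewise_C1_def pc_def by (rule refl)

lemma main:
  fixes U :: "'a::euclidean_space set" and V :: "nat \<Rightarrow> 'a \<Rightarrow> real"
  assumes "open U" "finite I" "\<forall>k\<in>I. proper_piecewise_C1 U (V k)"
    "continuous_on U F" "\<forall>x\<in>U. \<exists>k\<in>I. F x = V k x"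
  shows "proper_piecewise_C1 U F"
proof -
  have "\<forall>k\<in>I. \<exists>t. pc U (V k) (fst t) (fst (snd t)) (fst (snd (snd t))) (snd (snd (snd t)))"
  proof
    fix k assume "k \<in> I"
    then obtain N X Os W where "pc U (V k) N X Os W" using assms(3) ppc_iff by blast
    then show "\<exists>t. pc U (V k) (fst t) (fst (snd t)) (fst (snd (snd t))) (snd (snd (snd t)))"
      by (intro exI[of _ "(N, X, Os, W)"]) simp
  qed
  then obtain f where f: "\<forall>k\<in>I. pc U (V k) (fst (f k)) (fst (snd (f k))) (fst (snd (snd (f k)))) (snd (snd (snd (f k))))"
    by (rule bchoice[elim_format]) blast
  define N where "N k = fst (f k)" for k
  define X where "X k = fst (snd (f k))" for k
  define Os where "Os k = fst (snd (snd (f k)))" for k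
  define W where "W k = snd (snd (snd (f k)))" for k
  have P: "\<forall>k\<in>I. (\<forall>i\<in>{1..N k}. closed (X k i) \<and> open (Os k i) \<and> C1_on (Os k i) (W k i)) \<and>
       (\<forall>i\<in>{1..N k}. X k i \<inter> U \<subseteq> Os k i) \<and>
       (\<forall>i\<in>{1..N k}. closure (interior (X k i)) = X k i) \<and>
       U \<subseteq> (\<Union>i\<in>{1..N k}. X k i) \<and>
       (\<forall>i\<in>{1..N k}. \<forall>x\<in>X k i \<inter> U. V k x = W k i x)"
    using f unfolding pc_def N_def X_def Os_def W_def by blast
  have cV: "\<And>k. k \<in> I \<Longrightarrow> continuous_on U (V k)"
    using assms(3) unfolding proper_piecewise_C1_def by blast
  define J where "J = Sigma I (\<lambda>k. {1..N k})"
  define A where "A k = {x\<in>U. F x = V k x}" for k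
  define S where "S j = X (fst j) (snd j) \<inter> A (fst j)" for j
  have fJ: "finite J" using assms(2) by (simp add: J_def)
  have clA: "closedin (top_of_set U) (A k)" if "k \<in> I" for k
  proof -
    have "closedin (top_of_set U) {x\<in>U. F x - V k x = 0}"
      by (rule continuous_closedin_preimage_constant) (auto intro!: continuous_intros assms(4) cV that)
    then show ?thesis unfolding A_def by simp
  qed
  have clS: "\<forall>j\<in>J. closedin (top_of_set U) (S j)"
  proof
    fix j assume j: "j \<in> J"
    have "closedin (top_of_set U) (U \<inter> X (fst j) (snd j))"
      using P j unfolding J_def by (auto intro: closedin_closed_Int)
    moreover have "S j = (U \<inter> X (fst j) (snd j)) \<inter> A (fst j)"
      using S_def A_def by auto
    ultimately show "closedin (top_of_set U) (S j)"
      using clA j J_def by (auto intro: closedin_Int)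
  qed
  have covS: "U \<subseteq> (\<Union>j\<in>J. S j)"
  proof
    fix x assume x: "x \<in> U"
    then obtain k where k: "k \<in> I" "F x = V k x" using assms(5) by blast
    then obtain i where "i \<in> {1..N k}" "x \<in> X k i" using P x by blast
    then have "(k,i) \<in> J" "x \<in> S (k,i)" using k x by (auto simp: J_def S_def A_def)
    then show "x \<in> (\<Union>j\<in>J. S j)" by blast
  qed
  have Pj: "closed (X (fst j) (snd j)) \<and> open (Os (fst j) (snd j)) \<and> C1_on (Os (fst j) (snd j)) (W (fst j) (snd j))
      \<and> X (fst j) (snd j) \<inter> U \<subseteq> Os (fst j) (snd j)
      \<and> (\<forall>x\<in>X (fst j) (snd j) \<inter> U. V (fst j) x = W (fst j) (snd j) x)" if "j \<in> J" for j
  proof -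
    have "fst j \<in> I" "snd j \<in> {1..N (fst j)}" using that unfolding J_def by auto
    then show ?thesis using P by blast
  qed
  define Z where "Z j = closure (interior (S j))" for j
  show ?thesis
  proof (rule reindex[OF fJ assms(4), of Z "\<lambda>j. Os (fst j) (snd j)" "\<lambda>j. W (fst j) (snd j)"])
    have ZX: "Z j \<subseteq> X (fst j) (snd j)" if "j \<in> J" for j
    proof -
      have "closed (X (fst j) (snd j))" using Pj that by blast
      moreover have "interior (S j) \<subseteq> X (fst j) (snd j)"
        using interior_subset S_def by blast
      ultimately show ?thesis unfolding Z_def by (simp add: closure_minimal)
    qed
    show "\<forall>j\<in>J. closed (Z j) \<and> open (Os (fst j) (snd j)) \<and> C1_on (Os (fst j) (snd j)) (W (fst j) (snd j))"
      using Pj by (simp add: Z_def)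
    show "\<forall>j\<in>J. Z j \<inter> U \<subseteq> Os (fst j) (snd j)"
    proof
      fix j assume j: "j \<in> J"
      have "Z j \<inter> U \<subseteq> X (fst j) (snd j) \<inter> U" using ZX[OF j] by blast
      also have "\<dots> \<subseteq> Os (fst j) (snd j)" using Pj[OF j] by blast
      finally show "Z j \<inter> U \<subseteq> Os (fst j) (snd j)" .
    qed
    show "\<forall>j\<in>J. closure (interior (Z j)) = Z j"
      by (simp add: Z_def regular_closed_ci)
    show "U \<subseteq> (\<Union>j\<in>J. Z j)"
      unfolding Z_def using cover[OF fJ assms(1) clS covS] .
    show "\<forall>j\<in>J. \<forall>x\<in>Z j \<inter> U. F x = W (fst j) (snd j) x"
    proof (intro ballI)
      fix j x assume j: "j \<in> J" and x: "x \<in> Z j \<inter> U"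
      have fI: "fst j \<in> I" using j unfolding J_def by auto
      obtain T where T: "closed T" "A (fst j) = U \<inter> T"
        using clA[OF fI] closedin_closed by blast
      have "interior (S j) \<subseteq> T" using interior_subset[of "S j"] T(2) unfolding S_def by blast
      then have "Z j \<subseteq> T"
        unfolding Z_def using T(1) by (simp add: closure_minimal)
      then have "x \<in> A (fst j)" using x T by auto
      then have "F x = V (fst j) x" by (simp add: A_def)
      moreover have "x \<in> X (fst j) (snd j) \<inter> U" using ZX[OF j] x by auto
      ultimately show "F x = W (fst j) (snd j) x"
        using Pj[OF j] by simp
    qed
  qed
qed

lemma cont_Max:
  fixes V :: "nat \<Rightarrow> 'a::topological_space \<Rightarrow> real"
  assumes "finite I" "I \<noteq> {}" "\<forall>i\<in>I. continuous_on U (V i)"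
  shows "continuous_on U (\<lambda>x. Max ((\<lambda>i. V i x) ` I)) \<and> continuous_on U (\<lambda>x. Min ((\<lambda>i. V i x) ` I))"
  using assms
proof (induction I rule: finite_ne_induct)
  case (singleton x)
  then show ?case by simp
next
  case (insert a I)
  have e1: "(\<lambda>x. Max ((\<lambda>i. V i x) ` insert a I)) = (\<lambda>x. max (V a x) (Max ((\<lambda>i. V i x) ` I)))"
    using insert by auto
  have e2: "(\<lambda>x. Min ((\<lambda>i. V i x) ` insert a I)) = (\<lambda>x. min (V a x) (Min ((\<lambda>i. V i x) ` I)))"
    using insert by auto
  have ca: "continuous_on U (V a)" using insert.prems by simp
  have ih: "continuous_on U (\<lambda>x. Max ((\<lambda>i. V i x) ` I)) \<and> continuous_on U (\<lambda>x. Min ((\<lambda>i. V i x) ` I))"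
    using insert.IH insert.prems by simp
  have c1: "continuous_on U (\<lambda>x. max (V a x) (Max ((\<lambda>i. V i x) ` I)))"
    by (intro continuous_on_max ca conjunct1[OF ih])
  have c2: "continuous_on U (\<lambda>x. min (V a x) (Min ((\<lambda>i. V i x) ` I)))"
    by (intro continuous_on_min ca conjunct2[OF ih])
  show ?case unfolding e1 e2 using c1 c2 by simp
qed

theorem proposition3:
  fixes U :: "(real ^ 'n) set" and V :: "nat \<Rightarrow> real ^ 'n \<Rightarrow> real" and K :: nat
  assumes "open U" and "K \<ge> 1"
    and "\<And>i. i \<in> {1..K} \<Longrightarrow> proper_piecewise_C1 U (V i)"
  shows "proper_piecewise_C1 U (\<lambda>x. Max ((\<lambda>i. V i x) ` {1..K})) \<and>
         proper_piecewise_C1 U (\<lambda>x. Min ((\<lambda>i. V i x) ` {1..K}))"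
proof -
  have ne: "{1..K} \<noteq> {}" using assms(2) by auto
  have c: "\<forall>i\<in>{1..K}. continuous_on U (V i)"
    using assms(3) unfolding proper_piecewise_C1_def by blast
  note cm = cont_Max[OF finite_atLeastAtMost ne c]
  have m1: "\<forall>x\<in>U. \<exists>k\<in>{1..K}. Max ((\<lambda>i. V i x) ` {1..K}) = V k x"
  proof
    fix x
    have "Max ((\<lambda>i. V i x) ` {1..K}) \<in> (\<lambda>i. V i x) ` {1..K}"
      using ne by (intro Max_in) auto
    then show "\<exists>k\<in>{1..K}. Max ((\<lambda>i. V i x) ` {1..K}) = V k x" by auto
  qed
  have m2: "\<forall>x\<in>U. \<exists>k\<in>{1..K}. Min ((\<lambda>i. V i x) ` {1..K}) = V k x"
  proof
    fix x
    have "Min ((\<lambda>i. V i x) ` {1..K}) \<in> (\<lambda>i. V i x) ` {1..K}"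
      using ne by (intro Min_in) auto
    then show "\<exists>k\<in>{1..K}. Min ((\<lambda>i. V i x) ` {1..K}) = V k x" by auto
  qed
  have pp: "\<forall>k\<in>{1..K}. proper_piecewise_C1 U (V k)" using assms(3) by blast
  show ?thesis
  proof
    show "proper_piecewise_C1 U (\<lambda>x. Max ((\<lambda>i. V i x) ` {1..K}))"
      by (rule main[OF assms(1) finite_atLeastAtMost pp conjunct1[OF cm] m1])
    show "proper_piecewise_C1 U (\<lambda>x. Min ((\<lambda>i. V i x) ` {1..K}))"
      by (rule main[OF assms(1) finite_atLeastAtMost pp conjunct2[OF cm] m2])
  qed
qed

end
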